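(* Let $\mathcal M=(\mathbf M^{(\lambda)})_{\lambda>0}$ be a weight matrix on $\mathbb N_0^d$. (i) If for every $\lambda>0$ there exist $\kappa\ge\lambda$ and $A\ge1$ with $M^{(\lambda)}_{\alpha+e_j}\le A^{|\alpha|+1}M^{(\kappa)}_\alpha$ for all $\alpha\in\mathbb N_0^d$, $1\le j\le d$, then for every $\lambda>0$ there exist $\kappa\ge\lambda$ and $B_1,B_2\ge1$ such that for all $t\in\mathbb R^d$ $$(1+|t|)^{2(d+1)}\exp\omega_{\mathbf M^{(\kappa)}}(t)\le B_1\exp\omega_{\mathbf M^{(\lambda)}}(B_2t).$$ (ii) If for every $\lambda>0$ there exist $0<\kappa\le\lambda$ and $A\ge1$ with $M^{(\kappa)}_{\alpha+e_j}\le A^{|\alpha|+1}M^{(\lambda)}_\alpha$ for all $\alpha\in\mathbb N_0^d$, $1\le j\le d$, then for every $\lambda>0$ there exist $0<\kappa\le\lambda$ and $B_1,B_2\ge1$ such that for all $t\in\mathbb R^d$ $$(1+|t|)^{2(d+1)}\exp\omega_{\mathbf M^{(\lambda)}}(t)\le B_1\exp\omega_{\mathbf M^{(\kappa)}}(B_2t).$$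
   Context: A weight matrix is a family $\mathcal M=(\mathbf M^{(\lambda)})_{\lambda>0}$ with $\mathbf M^{(\lambda)}=(M^{(\lambda)}_\alpha)_{\alpha\in\mathbb N_0^d}$ sequences of positive reals, $M^{(\lambda)}_0=1$, and $M^{(\lambda)}_\alpha\le M^{(\kappa)}_\alpha$ for all $\alpha$ whenever $0<\lambda\le\kappa$. $e_j$ is the $j$-th unit vector, $|\alpha|=\sum\alpha_j$, $|t|$ the Euclidean norm. The associated weight function of $\mathbf M=(M_\alpha)$ is $\omega_{\mathbf M}(t)=\sup_{\alpha\in\mathbb N^d_{0,t}}\log\frac{|t^\alpha|}{M_\alpha}$ ($t\in\mathbb R^d$, possibly $+\infty$), where $\mathbb N^d_{0,t}=\{\alpha:\alpha_j=0\text{ whenever }t_j=0\}$ and $0^0:=1$. *)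

theory Defs
  imports "HOL-Analysis.Analysis" "HOL-Library.Extended_Real"
begin

text \<open>Multi-indices in N_0^d are functions 'n \<Rightarrow> nat, d = CARD('n); points of R^d are real^'n.\<close>

definition mi_len :: "('n::finite \<Rightarrow> nat) \<Rightarrow> nat" where
  "mi_len \<alpha> = (\<Sum>j\<in>UNIV. \<alpha> j)"

definition mi_unit :: "'n::finite \<Rightarrow> ('n \<Rightarrow> nat)" where
  "mi_unit j = (\<lambda>i. if i = j then 1 else 0)"

definition mi_pow :: "real^'n::finite \<Rightarrow> ('n \<Rightarrow> nat) \<Rightarrow> real" where
  "mi_pow t \<alpha> = (\<Prod>j\<in>UNIV. (t $ j) ^ (\<alpha> j))"

definition weight_matrix :: "(real \<Rightarrow> ('n::finite \<Rightarrow> nat) \<Rightarrow> real) \<Rightarrow> bool" where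
  "weight_matrix M \<longleftrightarrow>
     (\<forall>l>0. (\<forall>\<alpha>. M l \<alpha> > 0) \<and> M l (\<lambda>_. 0) = 1) \<and>
     (\<forall>l k \<alpha>. 0 < l \<and> l \<le> k \<longrightarrow> M l \<alpha> \<le> M k \<alpha>)"

definition assoc_weight :: "(('n::finite \<Rightarrow> nat) \<Rightarrow> real) \<Rightarrow> real^'n \<Rightarrow> ereal" where
  "assoc_weight M t =
     (SUP \<alpha> \<in> {\<alpha>. \<forall>j. t $ j = 0 \<longrightarrow> \<alpha> j = 0}. ereal (ln (\<bar>mi_pow t \<alpha>\<bar> / M \<alpha>)))"

fun exp_ereal :: "ereal \<Rightarrow> ereal" where
  "exp_ereal (ereal x) = ereal (exp x)"
| "exp_ereal PInfty = PInfty"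
| "exp_ereal MInfty = 0"

end

theory Submission
  imports Defs
begin

definition suppS :: "real^'n::finite \<Rightarrow> ('n \<Rightarrow> nat) set" where
  "suppS t = {\<alpha>. \<forall>j. t $ j = 0 \<longrightarrow> \<alpha> j = 0}"

lemma mi_pow_nz: "\<alpha> \<in> suppS t \<Longrightarrow> mi_pow t \<alpha> \<noteq> 0"
  unfolding mi_pow_def suppS_def by (auto simp: prod_zero_iff)

lemma mi_pow_scale: "mi_pow (c *\<^sub>R t) \<alpha> = c ^ mi_len \<alpha> * mi_pow t \<alpha>"
  unfolding mi_pow_def mi_len_def by (simp add: power_mult_distrib prod.distrib power_sum)

lemma mi_pow_unit: "mi_pow t (\<lambda>i. \<alpha> i + mi_unit j i) = mi_pow t \<alpha> * t $ j"
proof -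
  have "mi_pow t (\<lambda>i. \<alpha> i + mi_unit j i) = (\<Prod>i\<in>UNIV. (t$i)^\<alpha> i * (if i = j then t$i else 1))"
    unfolding mi_pow_def mi_unit_def by (intro prod.cong) (auto simp: power_add)
  also have "\<dots> = mi_pow t \<alpha> * t $ j"
    unfolding mi_pow_def prod.distrib by (simp add: prod.If_cases)
  finally show ?thesis .
qed

lemma mi_len_unit: "mi_len (\<lambda>i. \<alpha> i + mi_unit j i) = mi_len \<alpha> + 1"
  unfolding mi_len_def mi_unit_def by (simp add: sum.distrib)

lemma aw_eq: "assoc_weight M t = (SUP \<alpha> \<in> suppS t. ereal (ln (\<bar>mi_pow t \<alpha>\<bar> / M \<alpha>)))"
  unfolding assoc_weight_def suppS_def ..

lemma zero_suppS: "(\<lambda>_. 0) \<in> suppS t" by (simp add: suppS_def)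

lemma exp_ereal_inf[simp]: "exp_ereal \<infinity> = \<infinity>" "exp_ereal (-\<infinity>) = 0"
  using exp_ereal.simps(2,3) by simp_all

lemma E_lower:
  assumes "\<alpha> \<in> suppS t" "M \<alpha> > 0"
  shows "ereal (\<bar>mi_pow t \<alpha>\<bar> / M \<alpha>) \<le> exp_ereal (assoc_weight M t)"
proof -
  have pos: "\<bar>mi_pow t \<alpha>\<bar> / M \<alpha> > 0" using mi_pow_nz[OF assms(1)] assms(2) by simp
  have le: "ereal (ln (\<bar>mi_pow t \<alpha>\<bar> / M \<alpha>)) \<le> assoc_weight M t"
    unfolding aw_eq by (rule SUP_upper[OF assms(1)])
  show ?thesis
  proof (cases "assoc_weight M t")
    case (real r)
    with le have "ln (\<bar>mi_pow t \<alpha>\<bar> / M \<alpha>) \<le> r" by simp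
    then have "exp (ln (\<bar>mi_pow t \<alpha>\<bar> / M \<alpha>)) \<le> exp r" by simp
    with pos real show ?thesis by simp
  qed (use le in auto)
qed

lemma E_nonneg: "0 \<le> exp_ereal x"
  by (cases x) auto

lemma E_upper:
  assumes c: "c > 0" and Mpos: "\<And>\<alpha>. M \<alpha> > 0"
    and H: "\<And>\<alpha>. \<alpha> \<in> suppS t \<Longrightarrow> ereal (c * (\<bar>mi_pow t \<alpha>\<bar> / M \<alpha>)) \<le> X"
  shows "ereal c * exp_ereal (assoc_weight M t) \<le> X"
proof (cases X)
  case PInf
  then show ?thesis by simp
next
  case MInf
  have "ereal (c * (\<bar>mi_pow t (\<lambda>_. 0)\<bar> / M (\<lambda>_. 0))) \<le> X" by (rule H[OF zero_suppS])
  with MInf show ?thesis by simp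
next
  case (real x)
  have fpos: "\<bar>mi_pow t \<alpha>\<bar> / M \<alpha> > 0" if "\<alpha> \<in> suppS t" for \<alpha>
    using mi_pow_nz[OF that] Mpos[of \<alpha>] by simp
  have x0: "x > 0"
    using H[OF zero_suppS] fpos[OF zero_suppS] c real
    by (smt (verit, ccfv_SIG) ereal_less_eq(3) mult_pos_pos)
  have "ln (\<bar>mi_pow t \<alpha>\<bar> / M \<alpha>) \<le> ln (x / c)" if "\<alpha> \<in> suppS t" for \<alpha>
  proof -
    have "c * (\<bar>mi_pow t \<alpha>\<bar> / M \<alpha>) \<le> x" using H[OF that] real by simp
    then have "\<bar>mi_pow t \<alpha>\<bar> / M \<alpha> \<le> x / c" using c by (simp add: field_simps)
    then show ?thesis using fpos[OF that] by simp
  qed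
  then have le: "assoc_weight M t \<le> ereal (ln (x / c))"
    unfolding aw_eq by (intro SUP_least) simp
  show ?thesis
  proof (cases "assoc_weight M t")
    case (real r)
    with le have "exp r \<le> x / c" using x0 c
      by (metis divide_pos_pos ereal_less_eq(3) exp_le_cancel_iff exp_ln)
    then have "c * exp r \<le> x" using c by (simp add: field_simps)
    with real \<open>X = ereal x\<close> show ?thesis by simp
  qed (use le x0 real in auto)
qed

lemma suppS_scale: "A > 0 \<Longrightarrow> \<alpha> \<in> suppS t \<Longrightarrow> \<alpha> \<in> suppS (A *\<^sub>R t)"
  unfolding suppS_def by auto

lemma step_lemma:
  fixes M1 M2 :: "('n::finite \<Rightarrow> nat) \<Rightarrow> real"
  assumes M1pos: "\<And>\<alpha>. M1 \<alpha> > 0" and M2pos: "\<And>\<alpha>. M2 \<alpha> > 0"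
    and le: "\<And>\<alpha>. M1 \<alpha> \<le> M2 \<alpha>" and A: "A \<ge> 1"
    and H: "\<And>\<alpha> j. M1 (\<lambda>i. \<alpha> i + mi_unit j i) \<le> A ^ (mi_len \<alpha> + 1) * M2 \<alpha>"
  shows "ereal ((1 + norm t) / (CARD('n) + 1)) * exp_ereal (assoc_weight M2 t)
           \<le> exp_ereal (assoc_weight M1 (A *\<^sub>R t))"
proof (rule E_upper[OF _ M2pos])
  show "0 < (1 + norm t) / (CARD('n) + 1)" by (simp add: add_pos_nonneg)
next
  fix \<alpha> assume a: "\<alpha> \<in> suppS t"
  define X where "X = exp_ereal (assoc_weight M1 (A *\<^sub>R t))"
  define f where "f = \<bar>mi_pow t \<alpha>\<bar> / M2 \<alpha>"
  have A0: "A > 0" using A by simp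
  have f0: "f \<ge> 0" unfolding f_def using M2pos[of \<alpha>] by simp
  have h0: "ereal f \<le> X"
  proof -
    have "f \<le> \<bar>mi_pow (A *\<^sub>R t) \<alpha>\<bar> / M1 \<alpha>"
    proof -
      have p1: "1 \<le> A ^ mi_len \<alpha>" using A by simp
      have "f \<le> \<bar>mi_pow t \<alpha>\<bar> / M1 \<alpha>" unfolding f_def
        using M1pos[of \<alpha>] le[of \<alpha>] by (intro divide_left_mono) auto
      also have "\<dots> \<le> (A ^ mi_len \<alpha> * \<bar>mi_pow t \<alpha>\<bar>) / M1 \<alpha>"
        using M1pos[of \<alpha>] p1 by (intro divide_right_mono) (auto simp: mult_le_cancel_right1)
      also have "\<dots> = \<bar>mi_pow (A *\<^sub>R t) \<alpha>\<bar> / M1 \<alpha>"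
        using A0 by (simp add: mi_pow_scale abs_mult)
      finally show ?thesis .
    qed
    also have "ereal \<dots> \<le> X" unfolding X_def
      by (rule E_lower[OF suppS_scale[OF A0 a] M1pos])
    finally show ?thesis by simp
  qed
  have hj: "ereal (\<bar>t $ j\<bar> * f) \<le> X" for j
  proof (cases "t $ j = 0")
    case True
    then show ?thesis unfolding X_def using E_nonneg by (simp add: zero_ereal_def)
  next
    case False
    define \<beta> where "\<beta> = (\<lambda>i. \<alpha> i + mi_unit j i)"
    have b: "\<beta> \<in> suppS t" using a False unfolding suppS_def \<beta>_def mi_unit_def by auto
    have "\<bar>t $ j\<bar> * f = (A ^ (mi_len \<alpha> + 1) * \<bar>mi_pow t \<alpha> * t $ j\<bar>) / (A ^ (mi_len \<alpha> + 1) * M2 \<alpha>)"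
      unfolding f_def using A0 M2pos[of \<alpha>] by (simp add: abs_mult field_simps)
    also have "\<dots> \<le> (A ^ (mi_len \<alpha> + 1) * \<bar>mi_pow t \<alpha> * t $ j\<bar>) / M1 \<beta>"
      using H[of \<alpha> j] M1pos[of \<beta>] A0 unfolding \<beta>_def
      by (intro divide_left_mono) auto
    also have "\<dots> = \<bar>mi_pow (A *\<^sub>R t) \<beta>\<bar> / M1 \<beta>"
      using A0 unfolding \<beta>_def by (simp add: mi_pow_scale mi_pow_unit mi_len_unit abs_mult)
    finally have "\<bar>t $ j\<bar> * f \<le> \<bar>mi_pow (A *\<^sub>R t) \<beta>\<bar> / M1 \<beta>" .
    then have "ereal (\<bar>t $ j\<bar> * f) \<le> ereal (\<bar>mi_pow (A *\<^sub>R t) \<beta>\<bar> / M1 \<beta>)" by simp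
    also have "\<dots> \<le> X" unfolding X_def
      by (rule E_lower[OF suppS_scale[OF A0 b] M1pos])
    finally show ?thesis .
  qed
  show "ereal ((1 + norm t) / (CARD('n) + 1) * f) \<le> X"
  proof (cases X)
    case (real x)
    have fx: "f \<le> x" using h0 real by simp
    have tx: "\<bar>t $ j\<bar> * f \<le> x" for j using hj[of j] real by simp
    have "(1 + norm t) * f \<le> (1 + (\<Sum>j\<in>UNIV. \<bar>t $ j\<bar>)) * f"
      using norm_le_l1_cart[of t] f0 by (intro mult_right_mono) auto
    also have "\<dots> = f + (\<Sum>j\<in>UNIV. \<bar>t $ j\<bar> * f)" by (simp add: distrib_right sum_distrib_right)
    also have "\<dots> \<le> x + (\<Sum>j\<in>(UNIV::'n set). x)"
      using fx tx by (intro add_mono sum_mono) auto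
    also have "\<dots> = (CARD('n) + 1) * x" by (simp add: algebra_simps)
    finally have "(1 + norm t) * f \<le> (CARD('n) + 1) * x" .
    then have "(1 + norm t) / (CARD('n) + 1) * f \<le> x"
      by (simp add: field_simps add_pos_nonneg)
    with real show ?thesis by simp
  next
    case PInf then show ?thesis by simp
  next
    case MInf then show ?thesis using h0 by simp
  qed
qed

definition Rel :: "nat \<Rightarrow> (real^'n::finite \<Rightarrow> ereal) \<Rightarrow> (real^'n \<Rightarrow> ereal) \<Rightarrow> bool" where
  "Rel n F G \<longleftrightarrow> (\<exists>C>0. \<exists>B\<ge>1. \<forall>t. ereal (C * (1 + norm t) ^ n) * F t \<le> G (B *\<^sub>R t))"

lemma Rel_comp:
  assumes r1: "Rel n F G" and r2: "Rel m G H" and G0: "\<And>t. G t \<ge> 0"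
  shows "Rel (m + n) F H"
proof -
  obtain C1 B1 where C1: "C1 > 0" "B1 \<ge> 1" and h1: "\<And>t. ereal (C1 * (1 + norm t) ^ n) * F t \<le> G (B1 *\<^sub>R t)"
    using r1 unfolding Rel_def by blast
  obtain C2 B2 where C2: "C2 > 0" "B2 \<ge> 1" and h2: "\<And>t. ereal (C2 * (1 + norm t) ^ m) * G t \<le> H (B2 *\<^sub>R t)"
    using r2 unfolding Rel_def by blast
  have "ereal (C2 * C1 * (1 + norm t) ^ (m + n)) * F t \<le> H ((B2 * B1) *\<^sub>R t)" for t
  proof -
    have "ereal (C2 * C1 * (1 + norm t) ^ (m + n)) * F t
        = ereal (C2 * (1 + norm t) ^ m) * (ereal (C1 * (1 + norm t) ^ n) * F t)"
      by (simp add: power_add mult_ac)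
    also have "\<dots> \<le> ereal (C2 * (1 + norm t) ^ m) * G (B1 *\<^sub>R t)"
      using C2 by (intro ereal_mult_left_mono h1) auto
    also have "\<dots> \<le> ereal (C2 * (1 + norm (B1 *\<^sub>R t)) ^ m) * G (B1 *\<^sub>R t)"
    proof (intro ereal_mult_right_mono G0)
      have "norm t \<le> norm (B1 *\<^sub>R t)" using C1 by (simp add: mult_le_cancel_right1)
      then show "ereal (C2 * (1 + norm t) ^ m) \<le> ereal (C2 * (1 + norm (B1 *\<^sub>R t)) ^ m)"
        using C2 by (simp add: power_mono)
    qed
    also have "\<dots> \<le> H ((B2 * B1) *\<^sub>R t)" using h2[of "B1 *\<^sub>R t"] by simp
    finally show ?thesis .
  qed
  moreover have "C2 * C1 > 0" using C1 C2 by simp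
  moreover have "1 \<le> B2 * B1" using mult_mono[of 1 B2 1 B1] C1 C2 by simp
  ultimately show ?thesis unfolding Rel_def by blast
qed

lemma Rel_0: "Rel 0 F F"
  unfolding Rel_def by (rule exI[of _ 1]) (auto intro!: exI[of _ 1])

lemma Rel_final:
  assumes r: "Rel n F G" and G0: "\<And>t. G t \<ge> 0"
  shows "\<exists>B1\<ge>1. \<exists>B2\<ge>1. \<forall>t. ereal ((1 + norm t) ^ n) * F t \<le> ereal B1 * G (B2 *\<^sub>R t)"
proof -
  obtain C B where C: "C > 0" "B \<ge> 1" and h: "\<And>t. ereal (C * (1 + norm t) ^ n) * F t \<le> G (B *\<^sub>R t)"
    using r unfolding Rel_def by blast
  have "ereal ((1 + norm t) ^ n) * F t \<le> ereal (max 1 (1 / C)) * G (B *\<^sub>R t)" for t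
  proof -
    have "ereal ((1 + norm t) ^ n) * F t = ereal (1 / C) * (ereal (C * (1 + norm t) ^ n) * F t)"
      using C by (simp add: mult.assoc[symmetric])
    also have "\<dots> \<le> ereal (1 / C) * G (B *\<^sub>R t)"
      using C by (intro ereal_mult_left_mono h) auto
    also have "\<dots> \<le> ereal (max 1 (1 / C)) * G (B *\<^sub>R t)"
      by (intro ereal_mult_right_mono G0) auto
    finally show ?thesis .
  qed
  then show ?thesis using C by (intro exI[of _ "max 1 (1 / C)"] exI[of _ B]) auto
qed

lemma Rel_step:
  fixes M1 M2 :: "('n::finite \<Rightarrow> nat) \<Rightarrow> real"
  assumes M1pos: "\<And>\<alpha>. M1 \<alpha> > 0" and M2pos: "\<And>\<alpha>. M2 \<alpha> > 0"
    and le: "\<And>\<alpha>. M1 \<alpha> \<le> M2 \<alpha>" and A: "A \<ge> 1"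
    and H: "\<And>\<alpha> j. M1 (\<lambda>i. \<alpha> i + mi_unit j i) \<le> A ^ (mi_len \<alpha> + 1) * M2 \<alpha>"
  shows "Rel 1 (\<lambda>t. exp_ereal (assoc_weight M2 t)) (\<lambda>t. exp_ereal (assoc_weight M1 t))"
proof -
  have "ereal (1 / (CARD('n) + 1) * (1 + norm t) ^ 1) * exp_ereal (assoc_weight M2 t)
        \<le> exp_ereal (assoc_weight M1 (A *\<^sub>R t))" for t
    using step_lemma[OF M1pos M2pos le A H, of t] by simp
  moreover have "(1::real) / (CARD('n) + 1) > 0" by simp
  ultimately show ?thesis unfolding Rel_def using A
    by (intro exI[of _ "1 / (CARD('n) + 1)"] conjI exI[of _ A]) auto
qed

lemma W_nonneg: "0 \<le> (\<lambda>t. exp_ereal (assoc_weight M t)) t"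
  by (simp add: E_nonneg)

theorem lemma3p2:
  fixes M :: "real \<Rightarrow> ('n::finite \<Rightarrow> nat) \<Rightarrow> real"
  assumes wm: "weight_matrix M"
  shows
   "((\<forall>l>0. \<exists>k\<ge>l. \<exists>A\<ge>1. \<forall>\<alpha> j.
        M l (\<lambda>i. \<alpha> i + mi_unit j i) \<le> A ^ (mi_len \<alpha> + 1) * M k \<alpha>)
     \<longrightarrow> (\<forall>l>0. \<exists>k\<ge>l. \<exists>B1\<ge>1. \<exists>B2\<ge>1. \<forall>t::real^'n.
        ereal ((1 + norm t) ^ (2 * (CARD('n) + 1))) * exp_ereal (assoc_weight (M k) t)
          \<le> ereal B1 * exp_ereal (assoc_weight (M l) (B2 *\<^sub>R t))))
   \<and>
    ((\<forall>l>0. \<exists>k. 0 < k \<and> k \<le> l \<and> (\<exists>A\<ge>1. \<forall>\<alpha> j.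
        M k (\<lambda>i. \<alpha> i + mi_unit j i) \<le> A ^ (mi_len \<alpha> + 1) * M l \<alpha>))
     \<longrightarrow> (\<forall>l>0. \<exists>k. 0 < k \<and> k \<le> l \<and> (\<exists>B1\<ge>1. \<exists>B2\<ge>1. \<forall>t::real^'n.
        ereal ((1 + norm t) ^ (2 * (CARD('n) + 1))) * exp_ereal (assoc_weight (M l) t)
          \<le> ereal B1 * exp_ereal (assoc_weight (M k) (B2 *\<^sub>R t)))))"
proof -
  let ?W = "\<lambda>l t. exp_ereal (assoc_weight (M l) t)"
  have Mpos: "\<And>l \<alpha>. l > 0 \<Longrightarrow> M l \<alpha> > 0" and Mmono: "\<And>l k \<alpha>. 0 < l \<Longrightarrow> l \<le> k \<Longrightarrow> M l \<alpha> \<le> M k \<alpha>"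
    using wm unfolding weight_matrix_def by auto
  have G0: "\<And>l t. 0 \<le> ?W l t" by (simp add: E_nonneg)
  show ?thesis
  proof (intro conjI impI)
    assume hyp: "\<forall>l>0. \<exists>k\<ge>l. \<exists>A\<ge>1. \<forall>\<alpha> j.
        M l (\<lambda>i. \<alpha> i + mi_unit j i) \<le> A ^ (mi_len \<alpha> + 1) * M k \<alpha>"
    have main: "\<forall>l>0. \<exists>k\<ge>l. Rel n (?W k) (?W l)" for n
    proof (induction n)
      case 0
      then show ?case using Rel_0 order_refl by blast
    next
      case (Suc n)
      show ?case
      proof (intro allI impI)
        fix l :: real assume l: "l > 0"
        obtain k1 A where k1: "k1 \<ge> l" "A \<ge> 1" and H: "\<And>\<alpha> j.
          M l (\<lambda>i. \<alpha> i + mi_unit j i) \<le> A ^ (mi_len \<alpha> + 1) * M k1 \<alpha>"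
          using hyp l by blast
        have r1: "Rel 1 (?W k1) (?W l)"
          by (rule Rel_step[OF Mpos Mpos Mmono k1(2) H]) (use l k1 in auto)
        obtain k where k: "k \<ge> k1" and r2: "Rel n (?W k) (?W k1)"
          using Suc[rule_format, of k1] l k1 by auto
        have "Rel (1 + n) (?W k) (?W l)" by (rule Rel_comp[OF r2 r1 G0])
        then show "\<exists>k\<ge>l. Rel (Suc n) (?W k) (?W l)"
          using k k1 by (intro exI[of _ k]) auto
      qed
    qed
    show "\<forall>l>0. \<exists>k\<ge>l. \<exists>B1\<ge>1. \<exists>B2\<ge>1. \<forall>t::real^'n.
        ereal ((1 + norm t) ^ (2 * (CARD('n) + 1))) * exp_ereal (assoc_weight (M k) t)
          \<le> ereal B1 * exp_ereal (assoc_weight (M l) (B2 *\<^sub>R t))"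
    proof (intro allI impI)
      fix l :: real assume "l > 0"
      then obtain k where kl: "k \<ge> l" and r: "Rel (2 * (CARD('n) + 1)) (?W k) (?W l)" using main by blast
      then show "\<exists>k\<ge>l. \<exists>B1\<ge>1. \<exists>B2\<ge>1. \<forall>t::real^'n.
        ereal ((1 + norm t) ^ (2 * (CARD('n) + 1))) * exp_ereal (assoc_weight (M k) t)
          \<le> ereal B1 * exp_ereal (assoc_weight (M l) (B2 *\<^sub>R t))"
        using Rel_final[OF r G0] kl by blast
    qed
  next
    assume hyp: "\<forall>l>0. \<exists>k. 0 < k \<and> k \<le> l \<and> (\<exists>A\<ge>1. \<forall>\<alpha> j.
        M k (\<lambda>i. \<alpha> i + mi_unit j i) \<le> A ^ (mi_len \<alpha> + 1) * M l \<alpha>)"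
    have main: "\<forall>l>0. \<exists>k. 0 < k \<and> k \<le> l \<and> Rel n (?W l) (?W k)" for n
    proof (induction n)
      case 0
      then show ?case using Rel_0 by auto
    next
      case (Suc n)
      show ?case
      proof (intro allI impI)
        fix l :: real assume l: "l > 0"
        obtain k1 A where k1: "0 < k1" "k1 \<le> l" "A \<ge> 1" and H: "\<And>\<alpha> j.
          M k1 (\<lambda>i. \<alpha> i + mi_unit j i) \<le> A ^ (mi_len \<alpha> + 1) * M l \<alpha>"
          using hyp l by blast
        have r1: "Rel 1 (?W l) (?W k1)"
          by (rule Rel_step[OF Mpos Mpos Mmono k1(3) H]) (use l k1 in auto)
        obtain k where k: "0 < k" "k \<le> k1" and r2: "Rel n (?W k1) (?W k)"
          using Suc[rule_format, of k1] k1 by auto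
        have "Rel (n + 1) (?W l) (?W k)" by (rule Rel_comp[OF r1 r2 G0])
        then show "\<exists>k. 0 < k \<and> k \<le> l \<and> Rel (Suc n) (?W l) (?W k)"
          using k k1 by (intro exI[of _ k]) auto
      qed
    qed
    show "\<forall>l>0. \<exists>k. 0 < k \<and> k \<le> l \<and> (\<exists>B1\<ge>1. \<exists>B2\<ge>1. \<forall>t::real^'n.
        ereal ((1 + norm t) ^ (2 * (CARD('n) + 1))) * exp_ereal (assoc_weight (M l) t)
          \<le> ereal B1 * exp_ereal (assoc_weight (M k) (B2 *\<^sub>R t)))"
    proof (intro allI impI)
      fix l :: real assume "l > 0"
      then obtain k where kl: "0 < k" "k \<le> l" and r: "Rel (2 * (CARD('n) + 1)) (?W l) (?W k)" using main by blast
      then show "\<exists>k. 0 < k \<and> k \<le> l \<and> (\<exists>B1\<ge>1. \<exists>B2\<ge>1. \<forall>t::real^'n.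
        ereal ((1 + norm t) ^ (2 * (CARD('n) + 1))) * exp_ereal (assoc_weight (M l) t)
          \<le> ereal B1 * exp_ereal (assoc_weight (M k) (B2 *\<^sub>R t)))"
        using Rel_final[OF r G0] kl by blast
    qed
  qed
qed

end
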